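(* Let $a,b,g,h>0$ and let $\theta,\psi\in\mathbb{R}$ satisfy the constraint $$(g+b\,\mathrm{ch}\,\psi-a\,\mathrm{ch}\,\theta)^2-(b\,\mathrm{sh}\,\psi-a\,\mathrm{sh}\,\theta)^2=h^2 .$$ Put $A(\theta)=2gb-2ab\,\mathrm{ch}\,\theta$, $B(\theta)=2ab\,\mathrm{sh}\,\theta$, $C(\theta)=h^2-g^2-b^2-a^2+2ag\,\mathrm{ch}\,\theta$, and assume $A(\theta)+C(\theta)\neq 0$. Then $B(\theta)^2+C(\theta)^2-A(\theta)^2\ge 0$ and, for one choice of the sign $\pm$, $$\psi=2\,\mathrm{artanh}\,\frac{-B(\theta)\pm\sqrt{B(\theta)^2+C(\theta)^2-A(\theta)^2}}{A(\theta)+C(\theta)} .$$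
   Context: $\mathrm{ch},\mathrm{sh}$ denote the hyperbolic cosine and sine and $\mathrm{artanh}$ the inverse hyperbolic tangent. Interpretation: a Minkowskian planar 4R linkage in $\mathbb{R}^2$ with Lorentzian form $\langle u,v\rangle=u_1v_1-u_2v_2$ has fixed pivots $O=(0,0)$, $C=(g,0)$, moving pivots $A=(a\,\mathrm{ch}\,\theta,a\,\mathrm{sh}\,\theta)$ (input crank angle $\theta$) and $B=(g+b\,\mathrm{ch}\,\psi,b\,\mathrm{sh}\,\psi)$ (output crank angle $\psi$), and the coupler condition is $\langle B-A,B-A\rangle=h^2$, which is the displayed constraint. *)

theory Defs
  imports Complex_Main
begin

end

theory Submission
  imports Defs
begin

theorem mainTheorem3:
  fixes a b g h \<theta> \<psi> :: real
  assumes "a > 0" and "b > 0" and "g > 0" and "h > 0"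
    and constr: "(g + b * cosh \<psi> - a * cosh \<theta>)\<^sup>2 - (b * sinh \<psi> - a * sinh \<theta>)\<^sup>2 = h\<^sup>2"
    and AC: "(2*g*b - 2*a*b*cosh \<theta>) + (h\<^sup>2 - g\<^sup>2 - b\<^sup>2 - a\<^sup>2 + 2*a*g*cosh \<theta>) \<noteq> 0"
  shows "(2*a*b*sinh \<theta>)\<^sup>2 + (h\<^sup>2 - g\<^sup>2 - b\<^sup>2 - a\<^sup>2 + 2*a*g*cosh \<theta>)\<^sup>2
           - (2*g*b - 2*a*b*cosh \<theta>)\<^sup>2 \<ge> 0
       \<and> (\<exists>s \<in> {1, -1::real}.
            let A = 2*g*b - 2*a*b*cosh \<theta>;
                B = 2*a*b*sinh \<theta>;
                C = h\<^sup>2 - g\<^sup>2 - b\<^sup>2 - a\<^sup>2 + 2*a*g*cosh \<theta>;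
                x = (- B + s * sqrt (B\<^sup>2 + C\<^sup>2 - A\<^sup>2)) / (A + C)
            in \<bar>x\<bar> < 1 \<and> \<psi> = 2 * artanh x)"
proof -
  define A where "A = 2*g*b - 2*a*b*cosh \<theta>"
  define B where "B = 2*a*b*sinh \<theta>"
  define C where "C = h\<^sup>2 - g\<^sup>2 - b\<^sup>2 - a\<^sup>2 + 2*a*g*cosh \<theta>"
  have ACn: "A + C \<noteq> 0" using AC by (simp add: A_def C_def)
  have eq1: "A * cosh \<psi> + B * sinh \<psi> = C"
  proof -
    have "cosh \<theta> ^ 2 = sinh \<theta> ^ 2 + 1" "cosh \<psi> ^ 2 = sinh \<psi> ^ 2 + 1"
      by (simp_all add: cosh_square_eq)
    then show ?thesis using constr unfolding A_def B_def C_def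
      by (simp add: power2_eq_square algebra_simps)
  qed
  define c where "c = cosh (\<psi>/2)"
  define s where "s = sinh (\<psi>/2)"
  define t where "t = tanh (\<psi>/2)"
  have cpos: "c > 0" by (simp add: c_def)
  have ts: "t = s / c" by (simp add: t_def s_def c_def tanh_def)
  have css: "c^2 = s^2 + 1" by (simp add: c_def s_def cosh_square_eq)
  have ch: "cosh \<psi> = c^2 + s^2" using cosh_double[of "\<psi>/2"] by (simp add: c_def s_def)
  have sh: "sinh \<psi> = 2 * s * c" using sinh_double[of "\<psi>/2"] by (simp add: c_def s_def)
  have q0: "(A+C)*s^2 + 2*B*s*c + (A-C)*c^2 = 0"
    using eq1 css unfolding ch sh by (simp add: algebra_simps power2_eq_square)
  have q: "(A+C)*t^2 + 2*B*t + (A-C) = 0"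
  proof -
    have "((A+C)*s^2 + 2*B*s*c + (A-C)*c^2) / c^2 = 0" using q0 by simp
    then show ?thesis using cpos unfolding ts by (simp add: field_simps power2_eq_square)
  qed
  have D: "B\<^sup>2 + C\<^sup>2 - A\<^sup>2 = ((A+C)*t + B)^2"
  proof -
    have "((A+C)*t + B)^2 = (A+C)*((A+C)*t^2 + 2*B*t) + B^2"
      by (simp add: power2_eq_square algebra_simps)
    also have "(A+C)*t^2 + 2*B*t = C - A" using q by linarith
    finally show ?thesis by (simp add: power2_eq_square algebra_simps)
  qed
  define \<sigma> where "\<sigma> = (if (A+C)*t + B \<ge> 0 then 1 else -1::real)"
  have sig: "\<sigma> \<in> {1,-1}" by (simp add: \<sigma>_def)
  have sq: "\<sigma> * sqrt (B\<^sup>2 + C\<^sup>2 - A\<^sup>2) = (A+C)*t + B"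
    unfolding D by (simp add: \<sigma>_def)
  have tx: "t = (- B + \<sigma> * sqrt (B\<^sup>2 + C\<^sup>2 - A\<^sup>2)) / (A + C)"
    using ACn unfolding sq by (simp add: field_simps)
  have tb: "\<bar>t\<bar> < 1" using tanh_real_bounds[of "\<psi>/2"] by (auto simp: t_def)
  have tpsi: "\<psi> = 2 * artanh t" by (simp add: t_def artanh_tanh_real)
  have "B\<^sup>2 + C\<^sup>2 - A\<^sup>2 \<ge> 0" unfolding D by simp
  moreover have "\<exists>s \<in> {1, -1::real}.
            let x = (- B + s * sqrt (B\<^sup>2 + C\<^sup>2 - A\<^sup>2)) / (A + C)
            in \<bar>x\<bar> < 1 \<and> \<psi> = 2 * artanh x"
    using sig tx tb tpsi by (metis)
  ultimately show ?thesis unfolding A_def B_def C_def Let_def by simp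
qed

end
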